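(* In the setting of the memory-$\tau$ lace expansion for self-avoiding walk on $\mathbb Z^d$, the $n$-th coefficient $\alpha_n$ of the formal series expansion $\beta_\tau=\sum_{n\ge1}\alpha_n s^n$ does not depend on $\tau$ as long as $\tau\ge 2n-2$ (including $\tau=\infty$).
   Context: For $\tau\in\{1,2,\dots\}\cup\{\infty\}$, a memory-$\tau$ walk is a nearest-neighbour walk $\omega$ on $\mathbb Z^d$ with $\omega(i)\ne\omega(j)$ whenever $0<|i-j|\le\tau$. The memory-$\tau$ lace expansion (Brydges–Spencer) produces coefficients $c_{a,b}=c_{a,b}(\tau)$, $(a,b)\in I=\{b\ge1,\ b+1\le a\le 2b\}$, defined from counts of memory-$\tau$ lace graphs of length $a$; $c_{a,b}(\tau)$ is independent of $\tau$ once $\tau\ge a$. The series $\sum_n\alpha_n s^n$ is the unique formal power series solution $\beta$ of $\beta=s[1+\sum_{(a,b)\in I}c_{a,b}(\tau)\beta^a s^{b-a}]$, $s=1/(2d)$. *)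

theory Defs
  imports "HOL-Computational_Algebra.Formal_Power_Series" "HOL-Library.Extended_Nat"
begin

definition lace_index :: "(nat \<times> nat) set" where
  "lace_index = {(a, b). 1 \<le> b \<and> b + 1 \<le> a \<and> a \<le> 2 * b}"

text \<open>Memory parameter tau in {1,2,...} union {infinity}, modelled as enat with tau >= 1.
  The coefficients c a b tau are given as a function of type nat => nat => enat => real.\<close>

text \<open>Coefficient of s^n in the (formally Laurent) series
  sum over (a,b) in I of c(a,b) * beta^a * s^(b-a), for a power series beta with zero
  constant term.  The coefficient of s^n in beta^a s^(b-a) is the coefficient of
  s^(n+a-b) in beta^a, which vanishes when b > n (since beta^a has order >= a);
  hence only b <= n contribute and the sum below is exact.\<close>
definition lace_rhs :: "(nat \<Rightarrow> nat \<Rightarrow> enat \<Rightarrow> real) \<Rightarrow> enat \<Rightarrow> real fps \<Rightarrow> real fps" where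
  "lace_rhs c \<tau> \<beta> = Abs_fps (\<lambda>n. \<Sum>b\<in>{1..n}. \<Sum>a\<in>{b+1..2*b}.
       c a b \<tau> * fps_nth (\<beta> ^ a) (n + a - b))"

definition lace_solution :: "(nat \<Rightarrow> nat \<Rightarrow> enat \<Rightarrow> real) \<Rightarrow> enat \<Rightarrow> real fps \<Rightarrow> bool" where
  "lace_solution c \<tau> \<beta> \<longleftrightarrow> fps_nth \<beta> 0 = 0 \<and> \<beta> = fps_X * (1 + lace_rhs c \<tau> \<beta>)"

definition beta_tau :: "(nat \<Rightarrow> nat \<Rightarrow> enat \<Rightarrow> real) \<Rightarrow> enat \<Rightarrow> real fps" where
  "beta_tau c \<tau> = (THE \<beta>. lace_solution c \<tau> \<beta>)"

definition alpha :: "(nat \<Rightarrow> nat \<Rightarrow> enat \<Rightarrow> real) \<Rightarrow> enat \<Rightarrow> nat \<Rightarrow> real" where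
  "alpha c \<tau> n = fps_nth (beta_tau c \<tau>) n"

end

theory Submission
  imports Defs
begin

notation fps_nth (infixl "$$" 75)

lemma prod_agree:
  fixes f g h h' :: "real fps"
  assumes "\<forall>i\<le>k. f $$ i = g $$ i" "\<forall>i\<le>k. h $$ i = h' $$ i"
  shows "(f*h) $$ k = (g*h') $$ k"
  unfolding fps_mult_nth using assms by (intro sum.cong) auto

lemma pow_agree:
  fixes f g :: "real fps"
  assumes "\<forall>i\<le>k. f $$ i = g $$ i"
  shows "\<forall>i\<le>k. (f^a) $$ i = (g^a) $$ i"
proof (induction a)
  case 0 then show ?case by simp
next
  case (Suc a)
  show ?case
  proof (intro allI impI)
    fix i assume "i \<le> k"
    then have "(f * f^a) $$ i = (g * g^a) $$ i"
      using assms Suc by (intro prod_agree) auto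
    then show "(f^Suc a) $$ i = (g^Suc a) $$ i" by simp
  qed
qed

lemma X_shift: "(\<beta>::real fps) $$ 0 = 0 \<Longrightarrow> \<beta> = fps_X * fps_shift 1 \<beta>"
  by (intro fps_ext) auto

lemma pow_shift_nth:
  fixes \<beta> :: "real fps"
  assumes "\<beta> $$ 0 = 0" "b \<le> m" "b < a"
  shows "(\<beta>^a) $$ (m + a - b) = (fps_shift 1 \<beta> ^ a) $$ (m - b)"
proof -
  have "\<beta>^a = fps_X^a * fps_shift 1 \<beta> ^ a"
    using X_shift[OF assms(1)] by (metis power_mult_distrib)
  then show ?thesis using assms by (simp add: fps_X_power_mult_nth)
qed

lemma rhs_agree:
  fixes \<beta> \<gamma> :: "real fps"
  assumes "\<beta> $$ 0 = 0" "\<gamma> $$ 0 = 0" "\<forall>i\<le>m. \<beta> $$ i = \<gamma> $$ i"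
    and "\<And>a b. 1 \<le> b \<Longrightarrow> b \<le> m \<Longrightarrow> b+1 \<le> a \<Longrightarrow> a \<le> 2*b \<Longrightarrow> c a b \<tau> = c a b \<tau>'"
  shows "lace_rhs c \<tau> \<beta> $$ m = lace_rhs c \<tau>' \<gamma> $$ m"
proof -
  have "c a b \<tau> * (\<beta>^a) $$ (m + a - b) = c a b \<tau>' * (\<gamma>^a) $$ (m + a - b)"
    if "b \<in> {1..m}" "a \<in> {b+1..2*b}" for a b
  proof -
    have sh: "\<forall>i\<le>m - 1. fps_shift 1 \<beta> $$ i = fps_shift 1 \<gamma> $$ i"
      using assms(3) that by auto
    have "(\<beta>^a) $$ (m + a - b) = (fps_shift 1 \<beta> ^ a) $$ (m - b)"
      using that assms(1) by (intro pow_shift_nth) auto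
    also have "\<dots> = (fps_shift 1 \<gamma> ^ a) $$ (m - b)"
      using pow_agree[OF sh, of a] that by auto
    also have "\<dots> = (\<gamma>^a) $$ (m + a - b)"
      using that assms(2) by (intro pow_shift_nth[symmetric]) auto
    finally show ?thesis using assms(4)[of b a] that by auto
  qed
  then show ?thesis unfolding lace_rhs_def fps_nth_Abs_fps by (intro sum.cong refl) auto
qed

lemma sol_nth:
  assumes "lace_solution c \<tau> \<beta>"
  shows "\<beta> $$ 0 = 0" "\<beta> $$ (Suc m) = (if m = 0 then 1 else 0) + lace_rhs c \<tau> \<beta> $$ m"
proof -
  from assms have e: "\<beta> = fps_X * (1 + lace_rhs c \<tau> \<beta>)" "\<beta> $$ 0 = 0"
    unfolding lace_solution_def by auto
  show "\<beta> $$ 0 = 0" by fact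
  have "\<beta> $$ (Suc m) = (fps_X * (1 + lace_rhs c \<tau> \<beta>)) $$ (Suc m)" using e(1) by metis
  then show "\<beta> $$ (Suc m) = (if m = 0 then 1 else 0) + lace_rhs c \<tau> \<beta> $$ m"
    by simp
qed

lemma compare:
  assumes "lace_solution c \<tau> \<beta>" "lace_solution c \<tau>' \<gamma>"
    and "\<And>a b. 1 \<le> b \<Longrightarrow> b < N \<Longrightarrow> b+1 \<le> a \<Longrightarrow> a \<le> 2*b \<Longrightarrow> c a b \<tau> = c a b \<tau>'"
  shows "k \<le> N \<Longrightarrow> \<beta> $$ k = \<gamma> $$ k"
proof (induction k rule: less_induct)
  case (less k)
  show ?case
  proof (cases k)
    case 0 then show ?thesis using sol_nth(1)[OF assms(1)] sol_nth(1)[OF assms(2)] by simp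
  next
    case (Suc m)
    have "lace_rhs c \<tau> \<beta> $$ m = lace_rhs c \<tau>' \<gamma> $$ m"
      using sol_nth(1)[OF assms(1)] sol_nth(1)[OF assms(2)] less Suc
      by (intro rhs_agree assms(3)) auto
    then show ?thesis using Suc sol_nth(2)[OF assms(1)] sol_nth(2)[OF assms(2)] by simp
  qed
qed

primrec gseq :: "(nat \<Rightarrow> nat \<Rightarrow> enat \<Rightarrow> real) \<Rightarrow> enat \<Rightarrow> nat \<Rightarrow> real fps" where
  "gseq c \<tau> 0 = 0"
| "gseq c \<tau> (Suc k) = fps_X * (1 + lace_rhs c \<tau> (gseq c \<tau> k))"

lemma gseq0: "gseq c \<tau> k $$ 0 = 0"
  by (cases k) auto

lemma gseq_step: "\<forall>i\<le>k. gseq c \<tau> k $$ i = gseq c \<tau> (Suc k) $$ i"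
proof (induction k)
  case 0 then show ?case by (simp add: gseq0)
next
  case (Suc k)
  show ?case
  proof (intro allI impI)
    fix i assume i: "i \<le> Suc k"
    show "gseq c \<tau> (Suc k) $$ i = gseq c \<tau> (Suc (Suc k)) $$ i"
    proof (cases i)
      case 0 then show ?thesis by (simp add: gseq0)
    next
      case (Suc m)
      have "lace_rhs c \<tau> (gseq c \<tau> k) $$ m = lace_rhs c \<tau> (gseq c \<tau> (Suc k)) $$ m"
        using Suc.IH i Suc by (intro rhs_agree) (auto simp: gseq0)
      then show ?thesis using Suc by simp
    qed
  qed
qed

lemma gseq_stable: "k \<le> j \<Longrightarrow> i \<le> k \<Longrightarrow> gseq c \<tau> j $$ i = gseq c \<tau> k $$ i"
proof (induction j)
  case 0 then show ?case by simp
next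
  case (Suc j)
  show ?case
  proof (cases "k = Suc j")
    case True then show ?thesis by simp
  next
    case False
    then have "k \<le> j" using Suc by simp
    then show ?thesis using Suc gseq_step[of j c \<tau>] by auto
  qed
qed

lemma exists_sol: "\<exists>\<beta>. lace_solution c \<tau> \<beta>"
proof -
  define \<beta> where "\<beta> = Abs_fps (\<lambda>i. gseq c \<tau> i $$ i)"
  have agree: "\<forall>i\<le>k. \<beta> $$ i = gseq c \<tau> k $$ i" for k
    unfolding \<beta>_def proof (intro allI impI)
    fix i assume "i \<le> k"
    then show "Abs_fps (\<lambda>i. gseq c \<tau> i $$ i) $$ i = gseq c \<tau> k $$ i"
      using gseq_stable[where k=i and j=k and i=i and c=c and \<tau>=\<tau>] by simp
  qed
  have b0: "\<beta> $$ 0 = 0" unfolding \<beta>_def by (simp add: gseq0)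
  have "\<beta> = fps_X * (1 + lace_rhs c \<tau> \<beta>)"
  proof (rule fps_ext)
    fix i show "\<beta> $$ i = (fps_X * (1 + lace_rhs c \<tau> \<beta>)) $$ i"
    proof (cases i)
      case 0 then show ?thesis using b0 by simp
    next
      case (Suc m)
      have "lace_rhs c \<tau> \<beta> $$ m = lace_rhs c \<tau> (gseq c \<tau> m) $$ m"
        using agree[of m] b0 by (intro rhs_agree) (auto simp: gseq0)
      moreover have "\<beta> $$ i = gseq c \<tau> (Suc m) $$ (Suc m)" unfolding \<beta>_def Suc by simp
      ultimately show ?thesis using Suc by simp
    qed
  qed
  then show ?thesis using b0 unfolding lace_solution_def by blast
qed

lemma beta_sol: "lace_solution c \<tau> (beta_tau c \<tau>)"
proof -
  obtain \<beta> where b: "lace_solution c \<tau> \<beta>" using exists_sol by blast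
  have u: "\<gamma> = \<beta>" if "lace_solution c \<tau> \<gamma>" for \<gamma>
  proof (rule fps_ext)
    fix k show "\<gamma> $$ k = \<beta> $$ k" using compare[OF that b, where N=k and k=k] by auto
  qed
  show ?thesis unfolding beta_tau_def using b u by (rule theI)
qed

theorem mainTheorem3:
  fixes c :: "nat \<Rightarrow> nat \<Rightarrow> enat \<Rightarrow> real" and n :: nat and \<tau> \<tau>' :: enat
  assumes c_stable: "\<And>a b \<sigma> \<sigma>'. (a, b) \<in> lace_index \<Longrightarrow> 1 \<le> \<sigma> \<Longrightarrow> 1 \<le> \<sigma>' \<Longrightarrow>
              enat a \<le> \<sigma> \<Longrightarrow> enat a \<le> \<sigma>' \<Longrightarrow> c a b \<sigma> = c a b \<sigma>'"
    and "1 \<le> n"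
    and "1 \<le> \<tau>" and "1 \<le> \<tau>'"
    and "enat (2 * n - 2) \<le> \<tau>" and "enat (2 * n - 2) \<le> \<tau>'"
  shows "alpha c \<tau> n = alpha c \<tau>' n"
proof -
  have cc: "c a b \<tau> = c a b \<tau>'" if "1 \<le> b" "b < n" "b+1 \<le> a" "a \<le> 2*b" for a b
  proof -
    have "enat a \<le> enat (2 * n - 2)" using that by simp
    then have "enat a \<le> \<tau>" "enat a \<le> \<tau>'" using assms(5,6) order_trans by blast+
    then show ?thesis using that assms(3,4)
      by (intro c_stable) (auto simp: lace_index_def)
  qed
  show ?thesis unfolding alpha_def
    using compare[OF beta_sol beta_sol, where c=c and \<tau>=\<tau> and \<tau>'=\<tau>' and N=n and k=n] cc by auto
qed

end
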